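(* Let $s,q\in\mathbb N$ and $\epsilon\in(0,1)$. Let $\xi$ be a detailing of a distribution $\mu$ over $\{0,1\}^n$ with respect to a finite set $A$, with weight distribution $\eta$ and type distribution $\Lambda$, and let $\widetilde\eta$ be a distribution over $A$ and $\widetilde\Lambda$ a finitely supported distribution over $[0,1]^A$ with $d^\eta_{EM}(\Lambda,\widetilde\Lambda)\le\epsilon/(3sq)$ and $d_{TV}(\eta,\widetilde\eta)\le\epsilon/(3s)$. If $n\ge18q^2(s+1)/\epsilon$ and $\xi$ is $\left(\frac{\epsilon}{9(s+1)},q\right)$-good, then $d_{TV}(\mathcal{D}_{sim}(\widetilde\eta,\widetilde\Lambda),\mathcal{D}^{s,q}_{test}(\mu))\le\epsilon$. Consequently, for every function $\alpha:\{0,1\}^{s\times q}\to[0,1]$, $\left|\mathbb{E}_{M\sim\mathcal{D}_{sim}(\widetilde\eta,\widetilde\Lambda)}[\alpha(M)]-\mathbb{E}_{M\sim\mathcal{D}^{s,q}_{test}(\mu)}[\alpha(M)]\right|\le\epsilon$.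
   Context: A detailing of $\mu$ with respect to a finite set $A$ is a distribution $\xi$ over $\{0,1\}^n\times A$ whose marginal on $\{0,1\}^n$ is $\mu$; its weight distribution is $\eta=\xi|_2$, and $\xi|_1^{2:a}$ is the conditional distribution of the first coordinate given second coordinate $a$. The type of $i\in[n]$ is $t_i\in[0,1]^A$, $t_i(a)=\Pr_{x\sim\xi|_1^{2:a}}[x_i=1]$ if $\eta(a)>0$ and $0$ otherwise; the type distribution $\Lambda$ is the law of $t_{\mathbf i}$ for $\mathbf i$ uniform in $[n]$. A $q$-tuple $(j_1,\dots,j_q)$ of distinct indices is $\epsilon$-independent w.r.t. a distribution $\nu$ over $\{0,1\}^n$ if $d_{TV}(\nu|_{\{j_1,\dots,j_q\}},\prod_\ell\nu|_{j_\ell})\le\epsilon$; $\nu$ is $(\epsilon,q)$-good if at least a $1-\epsilon$ fraction of the $q$-tuples of distinct indices are $\epsilon$-independent; $\xi$ is $(\epsilon,q)$-good if some $J\subseteq A$ with $\eta(J)\ge1-\epsilon$ has $\xi|_1^{2:a}$ $(\epsilon,q)$-good for all $a\in J$. For $x,y\in[0,1]^A$, $d^\eta_{\ell_1}(x,y)=\sum_a\eta(a)|x_a-y_a|$ and $d^\eta_{EM}$ is the Earth Mover distance w.r.t. it. $\mathcal{D}_{sim}(\eta,\Lambda)$: draw $t_1..t_q\sim\Lambda$, $a_1..a_s\sim\eta$ independently, then $M_{i,j}\sim\mathrm{Ber}(t_j(a_i))$ independently. $\mathcal{D}^{s,q}_{test}(\mu)$: draw $x^1..x^s\sim\mu$ and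 $j_1..j_q$ uniform in $[n]$ independently, and output $M_{i,k}=x^i_{j_k}$. *)

theory Defs
  imports "HOL-Probability.Probability"
begin

text \<open>Vectors in {0,1}^n are functions nat => bool (coordinates 0..n-1);
  s x q matrices are functions nat * nat => bool, False outside {..<s} x {..<q}.
  The finite set A is a finite type 'a.\<close>

definition tv_dist :: "'b pmf \<Rightarrow> 'b pmf \<Rightarrow> real" where
  "tv_dist p r = (SUP S. \<bar>measure_pmf.prob p S - measure_pmf.prob r S\<bar>)"

definition is_detailing :: "nat \<Rightarrow> (nat \<Rightarrow> bool) pmf \<Rightarrow> ((nat \<Rightarrow> bool) \<times> 'a) pmf \<Rightarrow> bool" where
  "is_detailing n \<mu> \<xi> \<longleftrightarrow> map_pmf fst \<xi> = \<mu> \<and> set_pmf \<mu> \<subseteq> {x. \<forall>i\<ge>n. \<not> x i}"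

definition weight_dist :: "((nat \<Rightarrow> bool) \<times> 'a) pmf \<Rightarrow> 'a pmf" where
  "weight_dist \<xi> = map_pmf snd \<xi>"

definition cond1 :: "((nat \<Rightarrow> bool) \<times> 'a) pmf \<Rightarrow> 'a \<Rightarrow> (nat \<Rightarrow> bool) pmf" where
  "cond1 \<xi> a = map_pmf fst (cond_pmf \<xi> {p. snd p = a})"

definition type_of :: "((nat \<Rightarrow> bool) \<times> 'a) pmf \<Rightarrow> nat \<Rightarrow> 'a \<Rightarrow> real" where
  "type_of \<xi> i = (\<lambda>a. if pmf (weight_dist \<xi>) a > 0
       then measure_pmf.prob (cond1 \<xi> a) {x. x i} else 0)"

definition type_dist :: "nat \<Rightarrow> ((nat \<Rightarrow> bool) \<times> 'a) pmf \<Rightarrow> ('a \<Rightarrow> real) pmf" where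
  "type_dist n \<xi> = map_pmf (type_of \<xi>) (pmf_of_set {..<n})"

definition distinct_tuples :: "nat \<Rightarrow> nat \<Rightarrow> (nat \<Rightarrow> nat) set" where
  "distinct_tuples n q = {j. (\<forall>l<q. j l < n) \<and> inj_on j {..<q} \<and> (\<forall>l\<ge>q. j l = 0)}"

definition eps_independent :: "real \<Rightarrow> nat \<Rightarrow> (nat \<Rightarrow> bool) pmf \<Rightarrow> (nat \<Rightarrow> nat) \<Rightarrow> bool" where
  "eps_independent \<epsilon> q \<nu> j \<longleftrightarrow>
     tv_dist (map_pmf (\<lambda>x l. if l < q then x (j l) else False) \<nu>)
             (Pi_pmf {..<q} False (\<lambda>l. map_pmf (\<lambda>x. x (j l)) \<nu>)) \<le> \<epsilon>"

definition good_dist :: "nat \<Rightarrow> real \<Rightarrow> nat \<Rightarrow> (nat \<Rightarrow> bool) pmf \<Rightarrow> bool" where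
  "good_dist n \<epsilon> q \<nu> \<longleftrightarrow>
     real (card {j \<in> distinct_tuples n q. eps_independent \<epsilon> q \<nu> j})
       \<ge> (1 - \<epsilon>) * real (card (distinct_tuples n q))"

definition good_detailing :: "nat \<Rightarrow> real \<Rightarrow> nat \<Rightarrow> ((nat \<Rightarrow> bool) \<times> 'a) pmf \<Rightarrow> bool" where
  "good_detailing n \<epsilon> q \<xi> \<longleftrightarrow>
     (\<exists>J. J \<subseteq> set_pmf (weight_dist \<xi>) \<and> measure_pmf.prob (weight_dist \<xi>) J \<ge> 1 - \<epsilon>
          \<and> (\<forall>a\<in>J. good_dist n \<epsilon> q (cond1 \<xi> a)))"

definition d_l1 :: "'a::finite pmf \<Rightarrow> ('a \<Rightarrow> real) \<Rightarrow> ('a \<Rightarrow> real) \<Rightarrow> real" where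
  "d_l1 \<eta> x y = (\<Sum>a\<in>UNIV. pmf \<eta> a * \<bar>x a - y a\<bar>)"

definition couplings :: "'b pmf \<Rightarrow> 'c pmf \<Rightarrow> ('b \<times> 'c) pmf set" where
  "couplings p r = {\<pi>. map_pmf fst \<pi> = p \<and> map_pmf snd \<pi> = r}"

definition d_EM :: "'a::finite pmf \<Rightarrow> ('a \<Rightarrow> real) pmf \<Rightarrow> ('a \<Rightarrow> real) pmf \<Rightarrow> real" where
  "d_EM \<eta> \<Lambda> \<Lambda>' = (INF \<pi>\<in>couplings \<Lambda> \<Lambda>'. measure_pmf.expectation \<pi> (\<lambda>(x, y). d_l1 \<eta> x y))"

definition D_sim :: "nat \<Rightarrow> nat \<Rightarrow> 'a pmf \<Rightarrow> ('a \<Rightarrow> real) pmf \<Rightarrow> (nat \<times> nat \<Rightarrow> bool) pmf" where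
  "D_sim s q \<eta> \<Lambda> = do {
     t \<leftarrow> Pi_pmf {..<q} undefined (\<lambda>_. \<Lambda>);
     a \<leftarrow> Pi_pmf {..<s} undefined (\<lambda>_. \<eta>);
     Pi_pmf ({..<s} \<times> {..<q}) False (\<lambda>(i, j). bernoulli_pmf (t j (a i)))
   }"

definition D_test :: "nat \<Rightarrow> nat \<Rightarrow> nat \<Rightarrow> (nat \<Rightarrow> bool) pmf \<Rightarrow> (nat \<times> nat \<Rightarrow> bool) pmf" where
  "D_test n s q \<mu> = do {
     xs \<leftarrow> Pi_pmf {..<s} undefined (\<lambda>_. \<mu>);
     js \<leftarrow> Pi_pmf {..<q} undefined (\<lambda>_. pmf_of_set {..<n});
     return_pmf (\<lambda>(i, k). if i < s \<and> k < q then xs i (js k) else False)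
   }"

end

theory Submission
  imports Defs
begin


lemma measure_bind_pmf_E:
  "measure_pmf.prob (bind_pmf M N) X = measure_pmf.expectation M (\<lambda>x. measure_pmf.prob (N x) X)"
proof -
  have "ennreal (measure_pmf.prob (bind_pmf M N) X) = emeasure (bind_pmf M N) X"
    by (simp add: measure_pmf.emeasure_eq_measure)
  also have "\<dots> = (\<integral>\<^sup>+x. emeasure (N x) X \<partial>M)" by simp
  also have "\<dots> = (\<integral>\<^sup>+x. ennreal (measure_pmf.prob (N x) X) \<partial>M)"
    by (simp add: measure_pmf.emeasure_eq_measure)
  also have "\<dots> = ennreal (measure_pmf.expectation M (\<lambda>x. measure_pmf.prob (N x) X))"
    by (intro nn_integral_eq_integral measure_pmf.integrable_const_bound[where B=1]) auto
  finally show ?thesis by (simp add: integral_nonneg_AE)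
qed

context begin
interpretation pmf_as_function .
lemma bern_True: "pmf (bernoulli_pmf p) True = min 1 (max 0 p)"
  by transfer simp
lemma bern_False: "pmf (bernoulli_pmf p) False = 1 - min 1 (max 0 p)"
  by transfer simp
end

lemma integrable_pmf_bounded: "(\<And>x. \<bar>f x\<bar> \<le> B) \<Longrightarrow> integrable (measure_pmf M) (f :: _ \<Rightarrow> real)"
  by (intro measure_pmf.integrable_const_bound[where B=B]) auto



abbreviation Pr where "Pr p S \<equiv> measure_pmf.prob p S"
abbreviation Ep where "Ep p f \<equiv> measure_pmf.expectation p f"

lemma abs_prob_diff_le1: "\<bar>Pr p S - Pr r S\<bar> \<le> 1"
  using measure_pmf.prob_le_1[of p S] measure_pmf.prob_le_1[of r S]
    measure_nonneg[of p S] measure_nonneg[of r S] by linarith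

lemma tv_bdd: "bdd_above (range (\<lambda>S. \<bar>Pr p S - Pr r S\<bar>))"
  by (rule bdd_aboveI[where M=1]) (auto simp: abs_prob_diff_le1)

lemma tv_ge: "\<bar>Pr p S - Pr r S\<bar> \<le> tv_dist p r"
  unfolding tv_dist_def by (rule cSUP_upper[OF _ tv_bdd]) auto

lemma tv_le: "(\<And>S. \<bar>Pr p S - Pr r S\<bar> \<le> c) \<Longrightarrow> tv_dist p r \<le> c"
  unfolding tv_dist_def by (rule cSUP_least) auto

lemma tv_nonneg: "0 \<le> tv_dist p r"
  using tv_ge[of p "{}" r] by simp

lemma tv_le_1: "tv_dist p r \<le> 1"
  by (rule tv_le) (rule abs_prob_diff_le1)

lemma tv_sym: "tv_dist p r = tv_dist r p"
  unfolding tv_dist_def by (simp add: abs_minus_commute)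

lemma tv_triangle: "tv_dist p r \<le> tv_dist p m + tv_dist m r"
proof (rule tv_le)
  fix S
  have "\<bar>Pr p S - Pr r S\<bar> \<le> \<bar>Pr p S - Pr m S\<bar> + \<bar>Pr m S - Pr r S\<bar>" by linarith
  also have "\<dots> \<le> tv_dist p m + tv_dist m r" by (intro add_mono tv_ge)
  finally show "\<bar>Pr p S - Pr r S\<bar> \<le> tv_dist p m + tv_dist m r" .
qed

lemma tv_map: "tv_dist (map_pmf f p) (map_pmf f r) \<le> tv_dist p r"
  by (rule tv_le) (simp add: tv_ge)

lemma tv_self: "tv_dist p p = 0"
  using tv_le[of p p 0] tv_nonneg[of p p] by simp

lemma int_ind_pmf: "integrable (measure_pmf M) (indicator A :: _ \<Rightarrow> real)"
  by (rule integrable_pmf_bounded[where B=1]) (simp add: indicator_def)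

lemma card_le_floor:
  fixes y :: real assumes "0 \<le> y" "y \<le> real k"
  shows "card {i\<in>{1..k}. real i \<le> y} = nat \<lfloor>y\<rfloor>"
proof -
  have "{i\<in>{1..k}. real i \<le> y} = {1..nat \<lfloor>y\<rfloor>}"
  proof safe
    fix i assume "i \<in> {1..k}" "real i \<le> y"
    then show "i \<in> {1..nat \<lfloor>y\<rfloor>}" by (auto simp: le_nat_floor)
  next
    fix i assume "i \<in> {1..nat \<lfloor>y\<rfloor>}"
    then have "int i \<le> \<lfloor>y\<rfloor>" using assms by auto
    then have "real i \<le> y" by (metis le_floor_iff of_int_of_nat_eq)
    then show "i \<in> {1..k}" "real i \<le> y" using \<open>i \<in> _\<close> assms by auto
  qed
  then show ?thesis by simp
qed

lemma tv_expectation_aux: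
  fixes g :: "'b \<Rightarrow> real"
  assumes g: "\<And>x. 0 \<le> g x" "\<And>x. g x \<le> 1" and k: "k > 0"
  shows "\<bar>Ep p g - Ep r g\<bar> \<le> tv_dist p r + 2 / real k"
proof -
  define h where "h x = (\<Sum>i\<in>{1..k}. indicator {x. real i \<le> real k * g x} x) / real k" for x
  have hb: "g x - 1 / real k \<le> h x \<and> h x \<le> g x" for x
  proof -
    have "(\<Sum>i\<in>{1..k}. indicator {x. real i \<le> real k * g x} x) = real (card {i\<in>{1..k}. real i \<le> real k * g x})"
    proof -
      have "{1..k} \<inter> {i. real i \<le> real k * g x} = {i\<in>{1..k}. real i \<le> real k * g x}" by auto
      then show ?thesis by (simp add: indicator_def sum.If_cases)
    qed
    also have "\<dots> = real (nat \<lfloor>real k * g x\<rfloor>)"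
      using g[of x] k by (subst card_le_floor) (auto simp: mult_left_le)
    also have "\<dots> = of_int \<lfloor>real k * g x\<rfloor>" using g[of x] k by simp
    finally have e: "h x = of_int \<lfloor>real k * g x\<rfloor> / real k" unfolding h_def by simp
    have "real k * g x - 1 \<le> of_int \<lfloor>real k * g x\<rfloor>" "of_int \<lfloor>real k * g x\<rfloor> \<le> real k * g x"
      by linarith+
    moreover have "(real k * g x - 1) / real k = g x - 1 / real k" "real k * g x / real k = g x"
      using k by (auto simp: field_simps)
    ultimately show ?thesis using k unfolding e
      by (metis divide_right_mono of_nat_0_le_iff)
  qed
  have ig: "integrable (measure_pmf M) g" for M
    by (rule integrable_pmf_bounded[where B=1]) (use g in \<open>auto simp: abs_le_iff\<close>)
  have ih: "integrable (measure_pmf M) h" for M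
  proof (rule integrable_pmf_bounded[where B=1])
    fix x
    have "1 / real k \<le> 1" using k by simp
    then show "\<bar>h x\<bar> \<le> 1" using hb[of x] g[of x] by (simp add: abs_le_iff)
  qed
  have Eh: "Ep M h = (\<Sum>i\<in>{1..k}. Pr M {x. real i \<le> real k * g x}) / real k" for M
  proof -
    have "Ep M h = Ep M (\<lambda>x. \<Sum>i\<in>{1..k}. indicator {x. real i \<le> real k * g x} x :: real) / real k"
      unfolding h_def by (rule integral_divide_zero)
    also have "Ep M (\<lambda>x. \<Sum>i\<in>{1..k}. indicator {x. real i \<le> real k * g x} x :: real)
       = (\<Sum>i\<in>{1..k}. Ep M (indicator {x. real i \<le> real k * g x} :: _ \<Rightarrow> real))"
      by (subst Bochner_Integration.integral_sum) (auto intro: int_ind_pmf)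
    also have "\<dots> = (\<Sum>i\<in>{1..k}. Pr M {x. real i \<le> real k * g x})"
      by (intro sum.cong refl integral_indicator) (auto simp: measure_pmf.emeasure_eq_measure)
    finally show ?thesis .
  qed
  have "\<bar>Ep p h - Ep r h\<bar> = \<bar>\<Sum>i\<in>{1..k}. (Pr p {x. real i \<le> real k * g x} - Pr r {x. real i \<le> real k * g x})\<bar> / real k"
    unfolding Eh by (simp add: sum_subtractf diff_divide_distrib[symmetric])
  also have "\<dots> \<le> (\<Sum>i\<in>{1..k}. tv_dist p r) / real k"
    by (intro divide_right_mono order.trans[OF sum_abs] sum_mono tv_ge) auto
  also have "\<dots> = tv_dist p r" using k by simp
  finally have 1: "\<bar>Ep p h - Ep r h\<bar> \<le> tv_dist p r" .
  have 2: "Ep M g - 1 / real k \<le> Ep M h \<and> Ep M h \<le> Ep M g" for M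
  proof
    have "Ep M (\<lambda>x. g x - 1 / real k) \<le> Ep M h"
      by (intro integral_mono ih) (use ig hb in auto)
    then show "Ep M g - 1 / real k \<le> Ep M h" using ig by (simp add: prob_space_measure_pmf)
    show "Ep M h \<le> Ep M g" by (intro integral_mono ih ig) (use hb in auto)
  qed
  show ?thesis using 1 2[of p] 2[of r] by (simp add: abs_le_iff)
qed

lemma tv_expectation:
  fixes g :: "'b \<Rightarrow> real"
  assumes g: "\<And>x. 0 \<le> g x" "\<And>x. g x \<le> 1"
  shows "\<bar>Ep p g - Ep r g\<bar> \<le> tv_dist p r"
proof (rule field_le_epsilon)
  fix e :: real assume "0 < e"
  then obtain n where n: "inverse (real (Suc n)) < e / 2" using reals_Archimedean[of "e/2"] by auto
  have "\<bar>Ep p g - Ep r g\<bar> \<le> tv_dist p r + 2 / real (Suc n)"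
    by (rule tv_expectation_aux[OF g]) auto
  also have "2 / real (Suc n) < e" using n by (simp add: field_simps)
  finally show "\<bar>Ep p g - Ep r g\<bar> \<le> tv_dist p r + e" by simp
qed



lemma tv_bind_right: "tv_dist (bind_pmf p f) (bind_pmf r f) \<le> tv_dist p r"
proof (rule tv_le)
  fix S
  show "\<bar>Pr (bind_pmf p f) S - Pr (bind_pmf r f) S\<bar> \<le> tv_dist p r"
    unfolding measure_bind_pmf_E by (rule tv_expectation) auto
qed

lemma tv_bind_left:
  assumes B: "\<And>x. x \<in> set_pmf p \<Longrightarrow> tv_dist (f x) (g x) \<le> B x" and iB: "integrable (measure_pmf p) B"
  shows "tv_dist (bind_pmf p f) (bind_pmf p g) \<le> Ep p B"
proof (rule tv_le)
  fix S
  have i1: "integrable (measure_pmf p) (\<lambda>x. Pr (f x) S)" "integrable (measure_pmf p) (\<lambda>x. Pr (g x) S)"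
    by (auto intro!: integrable_pmf_bounded[where B=1])
  have "\<bar>Pr (bind_pmf p f) S - Pr (bind_pmf p g) S\<bar> = \<bar>Ep p (\<lambda>x. Pr (f x) S - Pr (g x) S)\<bar>"
    unfolding measure_bind_pmf_E using i1 by simp
  also have "\<dots> \<le> Ep p (\<lambda>x. \<bar>Pr (f x) S - Pr (g x) S\<bar>)"
    by (rule integral_abs_bound)
  also have "\<dots> \<le> Ep p B"
    using i1 iB by (intro integral_mono_AE) (auto simp: AE_measure_pmf_iff intro!: order.trans[OF tv_ge B])
  finally show "\<bar>Pr (bind_pmf p f) S - Pr (bind_pmf p g) S\<bar> \<le> Ep p B" .
qed

lemma tv_bind_left_const:
  assumes B: "\<And>x. x \<in> set_pmf p \<Longrightarrow> tv_dist (f x) (g x) \<le> c"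
  shows "tv_dist (bind_pmf p f) (bind_pmf p g) \<le> c"
  using tv_bind_left[of p f g "\<lambda>_. c"] B by (simp add: prob_space_measure_pmf)

lemma pair_pmf_bind_map: "pair_pmf p q = bind_pmf p (\<lambda>x. map_pmf (Pair x) q)"
  by (simp add: pair_pmf_def map_pmf_def o_def)

lemma tv_pair: "tv_dist (pair_pmf p1 p2) (pair_pmf q1 q2) \<le> tv_dist p1 q1 + tv_dist p2 q2"
proof -
  have "tv_dist (pair_pmf p1 p2) (pair_pmf q1 p2) \<le> tv_dist p1 q1"
    unfolding pair_pmf_bind_map by (rule tv_bind_right)
  moreover have "tv_dist (pair_pmf q1 p2) (pair_pmf q1 q2) \<le> tv_dist p2 q2"
    unfolding pair_pmf_bind_map by (rule tv_bind_left_const) (rule tv_map)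
  ultimately show ?thesis using tv_triangle[of "pair_pmf p1 p2" "pair_pmf q1 q2" "pair_pmf q1 p2"] by linarith
qed

lemma tv_Pi:
  assumes "finite I"
  shows "tv_dist (Pi_pmf I d P) (Pi_pmf I d Q) \<le> (\<Sum>i\<in>I. tv_dist (P i) (Q i))"
  using assms
proof (induction rule: finite_induct)
  case empty
  then show ?case by (simp add: tv_self)
next
  case (insert x F)
  have "tv_dist (Pi_pmf (insert x F) d P) (Pi_pmf (insert x F) d Q)
     \<le> tv_dist (pair_pmf (P x) (Pi_pmf F d P)) (pair_pmf (Q x) (Pi_pmf F d Q))"
    using insert by (simp add: Pi_pmf_insert tv_map)
  also have "\<dots> \<le> tv_dist (P x) (Q x) + tv_dist (Pi_pmf F d P) (Pi_pmf F d Q)" by (rule tv_pair)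
  also have "\<dots> \<le> tv_dist (P x) (Q x) + (\<Sum>i\<in>F. tv_dist (P i) (Q i))" using insert by simp
  finally show ?case using insert by simp
qed

lemma tv_bernoulli: "tv_dist (bernoulli_pmf a) (bernoulli_pmf b) \<le> \<bar>a - b\<bar>"
proof (rule tv_le)
  fix S :: "bool set"
  have c: "\<bar>min 1 (max 0 a) - min 1 (max 0 b)\<bar> \<le> \<bar>a - b\<bar>" by linarith
  have "S = {} \<or> S = {True} \<or> S = {False} \<or> S = UNIV"
    by (cases "True \<in> S"; cases "False \<in> S") (auto simp: UNIV_bool; metis (full_types))+
  then show "\<bar>Pr (bernoulli_pmf a) S - Pr (bernoulli_pmf b) S\<bar> \<le> \<bar>a - b\<bar>"
    using c by (auto simp: measure_pmf_single bern_True bern_False)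
qed

lemma bool_pmf_bernoulli: "p = bernoulli_pmf (Pr p {True})"
proof (rule pmf_eqI)
  fix x :: bool
  have "0 \<le> Pr p {True}" "Pr p {True} \<le> 1" by auto
  then show "pmf p x = pmf (bernoulli_pmf (Pr p {True})) x"
    by (cases x) (auto simp: measure_pmf_single pmf_False_conv_True)
qed



lemma finite_set_Pi_pmf:
  "finite I \<Longrightarrow> (\<And>i. i \<in> I \<Longrightarrow> finite (set_pmf (P i))) \<Longrightarrow> finite (set_pmf (Pi_pmf I d P))"
  by (subst set_Pi_pmf) auto

lemma stepA:
  "tv_dist (D_sim s q \<eta>1 \<Lambda>) (D_sim s q \<eta>2 \<Lambda>) \<le> real s * tv_dist \<eta>1 \<eta>2"
  unfolding D_sim_def
proof (rule tv_bind_left_const)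
  fix t
  have "tv_dist (Pi_pmf {..<s} undefined (\<lambda>_. \<eta>1) \<bind> (\<lambda>a. Pi_pmf ({..<s} \<times> {..<q}) False (\<lambda>(i, j). bernoulli_pmf (t j (a i)))))
    (Pi_pmf {..<s} undefined (\<lambda>_. \<eta>2) \<bind> (\<lambda>a. Pi_pmf ({..<s} \<times> {..<q}) False (\<lambda>(i, j). bernoulli_pmf (t j (a i)))))
    \<le> tv_dist (Pi_pmf {..<s} undefined (\<lambda>_. \<eta>1)) (Pi_pmf {..<s} undefined (\<lambda>_. \<eta>2))"
    by (rule tv_bind_right)
  also have "\<dots> \<le> (\<Sum>i<s. tv_dist \<eta>1 \<eta>2)" by (rule tv_Pi) simp
  finally show "tv_dist (Pi_pmf {..<s} undefined (\<lambda>_. \<eta>1) \<bind> (\<lambda>a. Pi_pmf ({..<s} \<times> {..<q}) False (\<lambda>(i, j). bernoulli_pmf (t j (a i)))))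
    (Pi_pmf {..<s} undefined (\<lambda>_. \<eta>2) \<bind> (\<lambda>a. Pi_pmf ({..<s} \<times> {..<q}) False (\<lambda>(i, j). bernoulli_pmf (t j (a i)))))
    \<le> real s * tv_dist \<eta>1 \<eta>2" by simp
qed

lemma E_component:
  fixes F :: "_ \<Rightarrow> real"
  assumes "finite I" "i \<in> I"
  shows "Ep (Pi_pmf I d P) (\<lambda>a. F (a i)) = Ep (P i) F"
proof -
  have "Ep (Pi_pmf I d P) (\<lambda>a. F (a i)) = Ep (map_pmf (\<lambda>a. a i) (Pi_pmf I d P)) F" by simp
  also have "map_pmf (\<lambda>a. a i) (Pi_pmf I d P) = P i" using assms by (simp add: Pi_pmf_component)
  finally show ?thesis .
qed

lemma E_d_l1: "Ep \<eta> (\<lambda>b. \<bar>x b - y b\<bar>) = d_l1 \<eta> x y"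
  unfolding d_l1_def by (subst integral_measure_pmf_real[where A=UNIV]) (auto simp: mult.commute)

lemma stepB:
  fixes \<eta> :: "'a::finite pmf" and \<pi> :: "(('a \<Rightarrow> real) \<times> ('a \<Rightarrow> real)) pmf"
  assumes fin: "finite (set_pmf \<pi>)"
  shows "tv_dist (D_sim s q \<eta> (map_pmf fst \<pi>)) (D_sim s q \<eta> (map_pmf snd \<pi>))
     \<le> real s * real q * Ep \<pi> (\<lambda>(x, y). d_l1 \<eta> x y)"
proof -
  define PP where "PP = Pi_pmf {..<q} (undefined, undefined) (\<lambda>_. \<pi>)"
  define PA where "PA = Pi_pmf {..<s} undefined (\<lambda>_. \<eta>)"
  define K where "K t a = Pi_pmf ({..<s} \<times> {..<q}) False (\<lambda>(i, j). bernoulli_pmf (t j (a i)))"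
    for t :: "nat \<Rightarrow> 'a \<Rightarrow> real" and a :: "nat \<Rightarrow> 'a"
  define G where "G t = bind_pmf PA (K t)" for t
  have finPP: "finite (set_pmf PP)" unfolding PP_def using fin by (intro finite_set_Pi_pmf) auto
  have finPA: "finite (set_pmf PA)" unfolding PA_def by (intro finite_set_Pi_pmf) auto
  have PT1: "Pi_pmf {..<q} undefined (\<lambda>_. map_pmf fst \<pi>) = map_pmf (\<lambda>h. fst \<circ> h) PP"
    unfolding PP_def by (rule Pi_pmf_map) auto
  have PT2: "Pi_pmf {..<q} undefined (\<lambda>_. map_pmf snd \<pi>) = map_pmf (\<lambda>h. snd \<circ> h) PP"
    unfolding PP_def by (rule Pi_pmf_map) auto
  have D1: "D_sim s q \<eta> (map_pmf fst \<pi>) = bind_pmf PP (\<lambda>h. G (fst \<circ> h))"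
    unfolding D_sim_def PT1 G_def K_def PA_def by (simp add: bind_map_pmf)
  have D2: "D_sim s q \<eta> (map_pmf snd \<pi>) = bind_pmf PP (\<lambda>h. G (snd \<circ> h))"
    unfolding D_sim_def PT2 G_def K_def PA_def by (simp add: bind_map_pmf)
  define F where "F h a = (\<Sum>ij\<in>{..<s} \<times> {..<q}. \<bar>fst (h (snd ij)) (a (fst ij)) - snd (h (snd ij)) (a (fst ij))\<bar>)"
    for h :: "nat \<Rightarrow> ('a \<Rightarrow> real) \<times> ('a \<Rightarrow> real)" and a :: "nat \<Rightarrow> 'a"
  have inner: "tv_dist (G (fst \<circ> h)) (G (snd \<circ> h)) \<le> Ep PA (F h)" for h
    unfolding G_def
  proof (rule tv_bind_left)
    show "integrable (measure_pmf PA) (F h)" by (rule integrable_measure_pmf_finite[OF finPA])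
    fix a
    have "tv_dist (K (fst \<circ> h) a) (K (snd \<circ> h) a)
      \<le> (\<Sum>ij\<in>{..<s} \<times> {..<q}. tv_dist ((\<lambda>(i, j). bernoulli_pmf ((fst \<circ> h) j (a i))) ij) ((\<lambda>(i, j). bernoulli_pmf ((snd \<circ> h) j (a i))) ij))"
      unfolding K_def by (rule tv_Pi) auto
    also have "\<dots> \<le> F h a" unfolding F_def
      by (intro sum_mono) (auto simp: tv_bernoulli)
    finally show "tv_dist (K (fst \<circ> h) a) (K (snd \<circ> h) a) \<le> F h a" .
  qed
  have "tv_dist (D_sim s q \<eta> (map_pmf fst \<pi>)) (D_sim s q \<eta> (map_pmf snd \<pi>)) \<le> Ep PP (\<lambda>h. Ep PA (F h))"
    unfolding D1 D2 by (rule tv_bind_left[OF inner integrable_measure_pmf_finite[OF finPP]])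
  also have "Ep PP (\<lambda>h. Ep PA (F h)) = (\<Sum>ij\<in>{..<s} \<times> {..<q}. Ep \<pi> (\<lambda>(x, y). d_l1 \<eta> x y))"
  proof -
    have "Ep PP (\<lambda>h. Ep PA (F h)) = Ep PP (\<lambda>h. \<Sum>ij\<in>{..<s} \<times> {..<q}. Ep PA (\<lambda>a. \<bar>fst (h (snd ij)) (a (fst ij)) - snd (h (snd ij)) (a (fst ij))\<bar>))"
      unfolding F_def by (intro Bochner_Integration.integral_cong refl Bochner_Integration.integral_sum integrable_measure_pmf_finite[OF finPA])
    also have "\<dots> = (\<Sum>ij\<in>{..<s} \<times> {..<q}. Ep PP (\<lambda>h. Ep PA (\<lambda>a. \<bar>fst (h (snd ij)) (a (fst ij)) - snd (h (snd ij)) (a (fst ij))\<bar>)))"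
      by (intro Bochner_Integration.integral_sum integrable_measure_pmf_finite[OF finPP])
    also have "\<dots> = (\<Sum>ij\<in>{..<s} \<times> {..<q}. Ep \<pi> (\<lambda>(x, y). d_l1 \<eta> x y))"
    proof (intro sum.cong refl)
      fix ij assume ij: "ij \<in> {..<s} \<times> {..<q}"
      have "Ep PP (\<lambda>h. Ep PA (\<lambda>a. \<bar>fst (h (snd ij)) (a (fst ij)) - snd (h (snd ij)) (a (fst ij))\<bar>))
         = Ep PP (\<lambda>h. d_l1 \<eta> (fst (h (snd ij))) (snd (h (snd ij))))"
        unfolding PA_def using ij
      proof (intro Bochner_Integration.integral_cong refl)
        fix h :: "nat \<Rightarrow> ('a \<Rightarrow> real) \<times> ('a \<Rightarrow> real)"
        show "Ep (Pi_pmf {..<s} undefined (\<lambda>_. \<eta>)) (\<lambda>a. \<bar>fst (h (snd ij)) (a (fst ij)) - snd (h (snd ij)) (a (fst ij))\<bar>) =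
         d_l1 \<eta> (fst (h (snd ij))) (snd (h (snd ij)))"
          using E_component[where I="{..<s}" and i="fst ij" and d=undefined and P="\<lambda>_. \<eta>"
              and F="\<lambda>b. \<bar>fst (h (snd ij)) b - snd (h (snd ij)) b\<bar>"] ij
          by (auto simp: E_d_l1)
      qed
      also have "\<dots> = Ep \<pi> (\<lambda>(x, y). d_l1 \<eta> x y)"
        unfolding PP_def using ij E_component[where I="{..<q}" and i="snd ij" and d="(undefined, undefined)"
          and P="\<lambda>_. \<pi>" and F="\<lambda>(x, y). d_l1 \<eta> x y"] by (auto simp: case_prod_beta)
      finally show "Ep PP (\<lambda>h. Ep PA (\<lambda>a. \<bar>fst (h (snd ij)) (a (fst ij)) - snd (h (snd ij)) (a (fst ij))\<bar>))
         = Ep \<pi> (\<lambda>(x, y). d_l1 \<eta> x y)" .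
    qed
    finally show ?thesis .
  qed
  also have "\<dots> = real s * real q * Ep \<pi> (\<lambda>(x, y). d_l1 \<eta> x y)" by simp
  finally show ?thesis .
qed



lemma fst_as_bind_cond:
  "map_pmf fst \<xi> = bind_pmf (map_pmf snd \<xi>) (cond1 \<xi>)"
proof -
  have "bind_pmf \<xi> (\<lambda>x. cond_pmf \<xi> {y. snd x = snd y}) = \<xi>"
    by (rule bind_cond_pmf_cancel) (auto intro!: arg_cong[where f="measure _"])
  then have "map_pmf fst \<xi> = map_pmf fst (bind_pmf \<xi> (\<lambda>x. cond_pmf \<xi> {y. snd x = snd y}))" by simp
  also have "\<dots> = bind_pmf \<xi> (\<lambda>x. cond1 \<xi> (snd x))"
    unfolding map_bind_pmf cond1_def by (simp add: eq_commute)
  also have "\<dots> = bind_pmf (map_pmf snd \<xi>) (cond1 \<xi>)" by (simp add: bind_map_pmf)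
  finally show ?thesis .
qed

lemma Pi_pmf_times:
  assumes A: "finite A" and B: "finite B"
  shows "Pi_pmf (A \<times> B) d (\<lambda>(i, j). P i j)
       = map_pmf (\<lambda>R (i, j). if i \<in> A \<and> j \<in> B then R i j else d) (Pi_pmf A dd (\<lambda>i. Pi_pmf B d (P i)))"
    (is "?L = map_pmf ?phi ?Q")
proof (rule pmf_eqI)
  fix g :: "'a \<times> 'b \<Rightarrow> 'c"
  show "pmf ?L g = pmf (map_pmf ?phi ?Q) g"
  proof (cases "\<forall>z. z \<notin> A \<times> B \<longrightarrow> g z = d")
    case False
    then obtain z where z: "z \<notin> A \<times> B" "g z \<noteq> d" by auto
    have "pmf ?L g = 0" using z A B by (intro pmf_Pi_outside) (auto simp: mem_Times_iff intro!: exI[of _ "fst z"] exI[of _ "snd z"])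
    moreover have "?phi R \<noteq> g" for R
    proof
      assume "?phi R = g"
      then have e: "?phi R z = g z" by simp
      obtain a b where ab: "z = (a, b)" by (cases z)
      have "?phi R z = d" using z(1) unfolding ab by simp blast
      then show False using e z(2) by simp
    qed
    then have "?phi -` {g} = {}" by auto
    ultimately show ?thesis by (simp add: pmf_map)
  next
    case True
    define R0 where "R0 = (\<lambda>i. if i \<in> A then (\<lambda>j. if j \<in> B then g (i, j) else d) else dd)"
    have phiR0: "?phi R0 = g"
    proof (rule ext)
      fix z :: "'a \<times> 'b"
      obtain a b where ab: "z = (a, b)" by (cases z)
      show "?phi R0 z = g z"
      proof (cases "a \<in> A \<and> b \<in> B")
        case inAB: True then show ?thesis unfolding ab by (simp add: R0_def)
      next
        case nAB: False
        then have "z \<notin> A \<times> B" unfolding ab by simp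
        then have "g z = d" using True by blast
        then show ?thesis using nAB unfolding ab by (simp only: case_prod_conv nAB if_False)
      qed
    qed
    have "pmf (map_pmf ?phi ?Q) g = Pr ?Q (?phi -` {g})" by (simp add: pmf_map)
    also have "\<dots> = Pr ?Q {R0}"
    proof (rule measure_prob_cong_0)
      fix R assume R: "R \<in> ?phi -` {g} - {R0}"
      show "pmf ?Q R = 0"
      proof (rule ccontr)
        assume "pmf ?Q R \<noteq> 0"
        then have "R \<in> set_pmf ?Q" by (rule iffD2[OF set_pmf_iff])
        then have RQ: "R \<in> PiE_dflt A dd (set_pmf \<circ> (\<lambda>i. Pi_pmf B d (P i)))" unfolding set_Pi_pmf[OF A] .
        have "R = R0"
        proof
          fix i show "R i = R0 i"
          proof (cases "i \<in> A")
            case True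
            then have "R i \<in> set_pmf (Pi_pmf B d (P i))" using RQ by (simp add: PiE_dflt_def)
            then have "R i \<in> PiE_dflt B d (set_pmf \<circ> P i)" unfolding set_Pi_pmf[OF B] .
            then have Rout: "j \<notin> B \<Longrightarrow> R i j = d" for j by (simp add: PiE_dflt_def)
            have Rg: "?phi R = g" using R by simp
            show ?thesis
            proof (rule ext)
              fix j
              show "R i j = R0 i j"
              proof (cases "j \<in> B")
                case jB: True
                have "?phi R (i, j) = g (i, j)" using Rg by simp
                then show ?thesis using jB \<open>i \<in> A\<close> by (simp add: R0_def)
              next
                case False
                then show ?thesis using Rout \<open>i \<in> A\<close> by (simp add: R0_def)
              qed
            qed
          next
            case False
            then show ?thesis using RQ unfolding R0_def by (simp add: PiE_dflt_def)
          qed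
        qed
        then show False using R by blast
      qed
    next
      fix R assume R: "R \<in> {R0} - ?phi -` {g}"
      then show "pmf ?Q R = 0" using phiR0 by blast
    qed
    also have "\<dots> = pmf ?Q R0" by (simp add: measure_pmf_single)
    also have "\<dots> = (\<Prod>i\<in>A. pmf (Pi_pmf B d (P i)) (R0 i))"
      by (rule pmf_Pi') (use A in \<open>simp_all add: R0_def\<close>)
    also have "\<dots> = (\<Prod>i\<in>A. \<Prod>j\<in>B. pmf (P i j) (g (i, j)))"
    proof (rule prod.cong[OF refl])
      fix i assume i: "i \<in> A"
      have "pmf (Pi_pmf B d (P i)) (R0 i) = (\<Prod>j\<in>B. pmf (P i j) (R0 i j))"
        by (rule pmf_Pi') (use B i in \<open>simp_all add: R0_def\<close>)
      also have "\<dots> = (\<Prod>j\<in>B. pmf (P i j) (g (i, j)))" using i by (intro prod.cong refl) (simp add: R0_def)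
      finally show "pmf (Pi_pmf B d (P i)) (R0 i) = (\<Prod>j\<in>B. pmf (P i j) (g (i, j)))" .
    qed
    also have "\<dots> = (\<Prod>z\<in>A \<times> B. pmf ((\<lambda>(i, j). P i j) z) (g z))"
      by (subst prod.cartesian_product) (simp add: case_prod_beta)
    also have "\<dots> = pmf ?L g"
      by (rule pmf_Pi'[symmetric]) (simp add: A B, use True in blast)
    finally show ?thesis ..
  qed
qed

lemma collision_pair:
  fixes l l' q n :: nat
  assumes "n > 0" "l < q" "l' < q" "l \<noteq> l'"
  shows "Pr (Pi_pmf {..<q} (0::nat) (\<lambda>_. pmf_of_set {..<n})) {f. f l = f l'} \<le> 1 / real n"
proof -
  define U where "U = pmf_of_set {..<n}"
  define R where "R = Pi_pmf ({..<q} - {l}) (0::nat) (\<lambda>_. U)"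
  have ins: "{..<q} = insert l ({..<q} - {l})" using assms by auto
  have "Pi_pmf {..<q} (0::nat) (\<lambda>_. U) = map_pmf (\<lambda>(y, f). f(l := y)) (pair_pmf U R)"
  proof -
    have "Pi_pmf (insert l ({..<q} - {l})) (0::nat) (\<lambda>_. U) = map_pmf (\<lambda>(y, f). f(l := y)) (pair_pmf U R)"
      unfolding R_def by (rule Pi_pmf_insert) auto
    then show ?thesis using ins by simp
  qed
  then have "Pr (Pi_pmf {..<q} (0::nat) (\<lambda>_. U)) {f. f l = f l'} = Pr (pair_pmf U R) {(y, f). y = f l'}"
    using assms by (auto intro!: arg_cong[where f="Pr _"])
  also have "\<dots> = Ep U (\<lambda>y. Pr R {f. y = f l'})"
    unfolding pair_pmf_bind_map measure_bind_pmf_E by (simp add: vimage_def)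
  also have "\<dots> \<le> Ep U (\<lambda>y. 1 / real n)"
  proof (rule integral_mono)
    show "integrable (measure_pmf U) (\<lambda>y. Pr R {f. y = f l'})"
      by (rule integrable_pmf_bounded[where B=1]) auto
    fix y
    have "Pr R {f. y = f l'} = Pr (map_pmf (\<lambda>f. f l') R) {y}" by (simp add: vimage_def eq_commute)
    also have "map_pmf (\<lambda>f. f l') R = U" unfolding R_def using assms by (simp add: Pi_pmf_component)
    also have "Pr U {y} \<le> 1 / real n"
    proof -
      have "Pr U {y} = real (card ({..<n} \<inter> {y})) / real n" using assms unfolding U_def
        by (subst measure_pmf_of_set) auto
      also have "\<dots> \<le> 1 / real n"
      proof -
        have "card ({..<n} \<inter> {y}) \<le> 1" by (rule order.trans[OF card_mono[of "{y}"]]) auto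
        then show ?thesis by (intro divide_right_mono) auto
      qed
      finally show ?thesis .
    qed
    finally show "Pr R {f. y = f l'} \<le> 1 / real n" .
  qed simp
  also have "\<dots> = 1 / real n" by (simp add: prob_space_measure_pmf)
  finally show ?thesis unfolding U_def .
qed

lemma collision:
  fixes q n :: nat
  assumes "n > 0"
  shows "Pr (Pi_pmf {..<q} (0::nat) (\<lambda>_. pmf_of_set {..<n})) {f. \<not> inj_on f {..<q}} \<le> real q ^ 2 / real n"
proof -
  define PJ where "PJ = Pi_pmf {..<q} (0::nat) (\<lambda>_. pmf_of_set {..<n})"
  define L where "L = {(l, l'). l < q \<and> l' < q \<and> l \<noteq> l'}"
  have Lsub: "L \<subseteq> {..<q} \<times> {..<q}" unfolding L_def by auto
  have finL: "finite L" using Lsub by (rule finite_subset) simp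
  have cardL: "card L \<le> q * q"
    using card_mono[OF _ Lsub] by (simp add: card_cartesian_product)
  have sub: "{f. \<not> inj_on f {..<q}} \<subseteq> (\<Union>p\<in>L. {f. f (fst p) = f (snd p)})"
  proof
    fix f assume "f \<in> {f. \<not> inj_on f {..<q}}"
    then obtain l l' where "l < q" "l' < q" "l \<noteq> l'" "f l = f l'" unfolding inj_on_def by blast
    then show "f \<in> (\<Union>p\<in>L. {f. f (fst p) = f (snd p)})" unfolding L_def
      by (intro UN_I[of "(l, l')"]) auto
  qed
  have "Pr PJ {f. \<not> inj_on f {..<q}} \<le> Pr PJ (\<Union>p\<in>L. {f. f (fst p) = f (snd p)})"
    using sub by (intro measure_pmf.finite_measure_mono) auto
  also have "\<dots> \<le> (\<Sum>p\<in>L. Pr PJ {f. f (fst p) = f (snd p)})"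
    by (rule measure_pmf.finite_measure_subadditive_finite[OF finL]) auto
  also have "\<dots> \<le> (\<Sum>p\<in>L. 1 / real n)"
  proof (rule sum_mono)
    fix p assume "p \<in> L"
    then show "Pr PJ {f. f (fst p) = f (snd p)} \<le> 1 / real n"
      unfolding PJ_def L_def using collision_pair[OF assms, of "fst p" q "snd p"] by (auto simp: case_prod_beta)
  qed
  also have "\<dots> = real (card L) / real n" by simp
  also have "\<dots> \<le> real q ^ 2 / real n"
  proof -
    have "real (card L) \<le> real q ^ 2" using cardL unfolding power2_eq_square
      by (metis of_nat_le_iff of_nat_mult)
    then show ?thesis by (rule divide_right_mono) simp
  qed
  finally show ?thesis unfolding PJ_def .
qed



lemma Dsim_type:
  "D_sim s q (weight_dist \<xi>) (type_dist n \<xi>) =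
     bind_pmf (Pi_pmf {..<s} undefined (\<lambda>_. weight_dist \<xi>)) (\<lambda>a.
       bind_pmf (Pi_pmf {..<q} (0::nat) (\<lambda>_. pmf_of_set {..<n})) (\<lambda>js.
         Pi_pmf ({..<s} \<times> {..<q}) False (\<lambda>(i, j). bernoulli_pmf (type_of \<xi> (js j) (a i)))))"
proof -
  define PJ where "PJ = Pi_pmf {..<q} (0::nat) (\<lambda>_. pmf_of_set {..<n})"
  define PA where "PA = Pi_pmf {..<s} undefined (\<lambda>_. weight_dist \<xi>)"
  have "Pi_pmf {..<q} undefined (\<lambda>_. type_dist n \<xi>)
      = map_pmf (\<lambda>f x. if x \<in> {..<q} then f x else undefined) (Pi_pmf {..<q} (type_of \<xi> 0) (\<lambda>_. type_dist n \<xi>))"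
    by (rule Pi_pmf_default_swap[symmetric]) simp
  also have "Pi_pmf {..<q} (type_of \<xi> 0) (\<lambda>_. type_dist n \<xi>) = map_pmf (\<lambda>h. type_of \<xi> \<circ> h) PJ"
    unfolding type_dist_def PJ_def by (rule Pi_pmf_map) auto
  finally have PT: "Pi_pmf {..<q} undefined (\<lambda>_. type_dist n \<xi>)
      = map_pmf (\<lambda>h x. if x \<in> {..<q} then type_of \<xi> (h x) else undefined) PJ"
    by (simp add: pmf.map_comp o_def)
  have K: "Pi_pmf ({..<s} \<times> {..<q}) False (\<lambda>(i, j). bernoulli_pmf ((\<lambda>x. if x \<in> {..<q} then type_of \<xi> (js x) else undefined) j (a i)))
     = Pi_pmf ({..<s} \<times> {..<q}) False (\<lambda>(i, j). bernoulli_pmf (type_of \<xi> (js j) (a i)))" for js a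
    by (rule Pi_pmf_cong) auto
  have "D_sim s q (weight_dist \<xi>) (type_dist n \<xi>) = bind_pmf PJ (\<lambda>js. bind_pmf PA (\<lambda>a.
         Pi_pmf ({..<s} \<times> {..<q}) False (\<lambda>(i, j). bernoulli_pmf (type_of \<xi> (js j) (a i)))))"
    unfolding D_sim_def PT bind_map_pmf K PA_def ..
  also have "\<dots> = bind_pmf PA (\<lambda>a. bind_pmf PJ (\<lambda>js.
         Pi_pmf ({..<s} \<times> {..<q}) False (\<lambda>(i, j). bernoulli_pmf (type_of \<xi> (js j) (a i)))))"
    by (rule bind_commute_pmf)
  finally show ?thesis unfolding PA_def PJ_def .
qed

lemma Dtest_form:
  assumes "is_detailing n \<mu> \<xi>"
  shows "D_test n s q \<mu> =
     bind_pmf (Pi_pmf {..<s} undefined (\<lambda>_. weight_dist \<xi>)) (\<lambda>a.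
       bind_pmf (Pi_pmf {..<q} (0::nat) (\<lambda>_. pmf_of_set {..<n})) (\<lambda>js.
         map_pmf (\<lambda>xs. (\<lambda>(i, k). if i < s \<and> k < q then xs i (js k) else False))
           (Pi_pmf {..<s} undefined (\<lambda>i. cond1 \<xi> (a i)))))"
proof -
  define PJ where "PJ = Pi_pmf {..<q} (0::nat) (\<lambda>_. pmf_of_set {..<n})"
  define PA where "PA = Pi_pmf {..<s} undefined (\<lambda>_. weight_dist \<xi>)"
  define mat where "mat xs js = (\<lambda>(i, k). if i < s \<and> k < q then xs i (js k) else False)"
    for xs :: "nat \<Rightarrow> nat \<Rightarrow> bool" and js :: "nat \<Rightarrow> nat"
  have mu: "\<mu> = bind_pmf (weight_dist \<xi>) (cond1 \<xi>)"
    using assms unfolding is_detailing_def weight_dist_def by (simp add: fst_as_bind_cond)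
  have PX: "Pi_pmf {..<s} undefined (\<lambda>_. \<mu>) = bind_pmf PA (\<lambda>a. Pi_pmf {..<s} undefined (\<lambda>i. cond1 \<xi> (a i)))"
    unfolding mu PA_def by (rule Pi_pmf_bind[where d'=undefined]) simp
  have PJU: "Pi_pmf {..<q} undefined (\<lambda>_. pmf_of_set {..<n}) = map_pmf (\<lambda>f x. if x \<in> {..<q} then f x else undefined) PJ"
    unfolding PJ_def by (rule Pi_pmf_default_swap[symmetric]) simp
  have M: "(\<lambda>(i, k). if i < s \<and> k < q then xs i ((\<lambda>x. if x \<in> {..<q} then js x else undefined) k) else False) = mat xs js"
    for xs js unfolding mat_def by (auto simp: fun_eq_iff)
  have "D_test n s q \<mu> = bind_pmf PA (\<lambda>a. bind_pmf (Pi_pmf {..<s} undefined (\<lambda>i. cond1 \<xi> (a i)))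
          (\<lambda>xs. bind_pmf PJ (\<lambda>js. return_pmf (mat xs js))))"
    unfolding D_test_def PX PJU bind_map_pmf M bind_assoc_pmf ..
  also have "\<dots> = bind_pmf PA (\<lambda>a. bind_pmf PJ (\<lambda>js. bind_pmf (Pi_pmf {..<s} undefined (\<lambda>i. cond1 \<xi> (a i)))
          (\<lambda>xs. return_pmf (mat xs js))))"
    by (subst bind_commute_pmf) (rule refl)
  also have "\<dots> = bind_pmf PA (\<lambda>a. bind_pmf PJ (\<lambda>js. map_pmf (\<lambda>xs. mat xs js) (Pi_pmf {..<s} undefined (\<lambda>i. cond1 \<xi> (a i)))))"
    by (simp add: map_pmf_def o_def)
  finally show ?thesis unfolding PA_def PJ_def mat_def .
qed

lemma row_bound:
  assumes b: "b \<in> set_pmf (weight_dist \<xi>)" and ind: "eps_independent e q (cond1 \<xi> b) js"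
  shows "tv_dist (Pi_pmf {..<q} False (\<lambda>j. bernoulli_pmf (type_of \<xi> (js j) b)))
                 (map_pmf (\<lambda>x l. if l < q then x (js l) else False) (cond1 \<xi> b)) \<le> e"
proof -
  have pos: "pmf (weight_dist \<xi>) b > 0" using b by (simp add: pmf_positive)
  have marg: "map_pmf (\<lambda>x. x (js l)) (cond1 \<xi> b) = bernoulli_pmf (type_of \<xi> (js l) b)" for l
  proof -
    have "map_pmf (\<lambda>x. x (js l)) (cond1 \<xi> b) = bernoulli_pmf (Pr (map_pmf (\<lambda>x. x (js l)) (cond1 \<xi> b)) {True})"
      by (rule bool_pmf_bernoulli)
    also have "Pr (map_pmf (\<lambda>x. x (js l)) (cond1 \<xi> b)) {True} = type_of \<xi> (js l) b"
      using pos unfolding type_of_def by (simp add: vimage_def)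
    finally show ?thesis .
  qed
  have "Pi_pmf {..<q} False (\<lambda>l. map_pmf (\<lambda>x. x (js l)) (cond1 \<xi> b)) = Pi_pmf {..<q} False (\<lambda>j. bernoulli_pmf (type_of \<xi> (js j) b))"
    by (simp add: marg)
  then show ?thesis using ind unfolding eps_independent_def by (simp add: tv_sym)
qed

lemma count_bad:
  fixes n q :: nat and e :: real
  assumes n: "n > 0" and g: "good_dist n e q \<nu>" and e: "0 \<le> e"
  shows "Pr (Pi_pmf {..<q} (0::nat) (\<lambda>_. pmf_of_set {..<n}))
            (distinct_tuples n q - {j \<in> distinct_tuples n q. eps_independent e q \<nu> j}) \<le> e"
proof -
  define P where "P = PiE_dflt {..<q} (0::nat) (\<lambda>_. {..<n})"
  define D where "D = distinct_tuples n q"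
  define G where "G = {j \<in> D. eps_independent e q \<nu> j}"
  have PJ: "Pi_pmf {..<q} (0::nat) (\<lambda>_. pmf_of_set {..<n}) = pmf_of_set P"
    unfolding P_def using n by (intro Pi_pmf_of_set) auto
  have finP: "finite P" unfolding P_def by auto
  have cardP: "card P = n ^ q" unfolding P_def by (subst card_PiE_dflt) auto
  have Pne: "P \<noteq> {}" unfolding P_def using n by auto
  have DP: "D \<subseteq> P" unfolding D_def P_def distinct_tuples_def PiE_dflt_def by auto
  have finD: "finite D" using DP finP by (rule finite_subset)
  have GD: "G \<subseteq> D" unfolding G_def by auto
  have "real (card G) \<ge> (1 - e) * real (card D)" using g unfolding good_dist_def G_def D_def .
  moreover have "card (D - G) = card D - card G" using GD finD by (simp add: card_Diff_subset finite_subset)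
  moreover have "card G \<le> card D" using GD finD by (rule card_mono[rotated])
  ultimately have cDG: "real (card (D - G)) \<le> e * real (card D)" by (simp add: of_nat_diff algebra_simps)
  have "Pr (pmf_of_set P) (D - G) = real (card (P \<inter> (D - G))) / real (card P)"
    using finP Pne by (simp add: measure_pmf_of_set)
  also have "P \<inter> (D - G) = D - G" using DP by auto
  also have "real (card (D - G)) / real (card P) \<le> e * real (card D) / real (card P)"
    using cDG by (rule divide_right_mono) simp
  also have "\<dots> \<le> e"
  proof -
    have "card D \<le> card P" using DP finP by (rule card_mono[rotated])
    moreover have "card P > 0" using finP Pne by (simp add: card_gt_0_iff)
    ultimately have "e * real (card D) \<le> e * real (card P)" "real (card P) > 0"
      using e by (auto intro: mult_left_mono)
    then show ?thesis by (simp add: divide_le_eq)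
  qed
  finally show ?thesis unfolding PJ D_def G_def .
qed



lemma stepC:
  fixes \<xi> :: "((nat \<Rightarrow> bool) \<times> 'a::finite) pmf" and e :: real
  assumes det: "is_detailing n \<mu> \<xi>" and n: "n > 0" and e: "0 \<le> e"
    and good: "good_detailing n e q \<xi>"
  shows "tv_dist (D_sim s q (weight_dist \<xi>) (type_dist n \<xi>)) (D_test n s q \<mu>) \<le> real q ^ 2 / real n + 3 * real s * e"
proof -
  define \<eta> where "\<eta> = weight_dist \<xi>"
  define PJ where "PJ = Pi_pmf {..<q} (0::nat) (\<lambda>_. pmf_of_set {..<n})"
  define PA where "PA = Pi_pmf {..<s} undefined (\<lambda>_. \<eta>)"
  define c where "c = cond1 \<xi>"
  define \<tau> where "\<tau> = type_of \<xi>"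
  define D where "D = distinct_tuples n q"
  define G where "G b = {j \<in> D. eps_independent e q (c b) j}" for b
  define N where "N = {f :: nat \<Rightarrow> nat. \<not> inj_on f {..<q}}"
  define row where "row = (\<lambda>(js :: nat \<Rightarrow> nat) (x :: nat \<Rightarrow> bool) l. if l < q then x (js l) else False)"
  define comb where "comb = (\<lambda>(R :: nat \<Rightarrow> nat \<Rightarrow> bool). \<lambda>(i, j). if i \<in> {..<s} \<and> j \<in> {..<q} then R i j else False)"
  obtain J where J: "J \<subseteq> set_pmf \<eta>" "Pr \<eta> J \<ge> 1 - e" "\<And>b. b \<in> J \<Longrightarrow> good_dist n e q (c b)"
    using good unfolding good_detailing_def \<eta>_def c_def by blast
  define Bd where "Bd a js = indicator N js + (\<Sum>i<s. indicator (-J) (a i) + indicator J (a i) * indicator (D - G (a i)) js + e)"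
    for a :: "nat \<Rightarrow> 'a" and js :: "nat \<Rightarrow> nat"
  define KS where "KS a js = Pi_pmf ({..<s} \<times> {..<q}) False (\<lambda>(i, j). bernoulli_pmf (\<tau> (js j) (a i)))"
    for a :: "nat \<Rightarrow> 'a" and js :: "nat \<Rightarrow> nat"
  define KT where "KT a js = map_pmf (\<lambda>xs. (\<lambda>(i, k). if i < s \<and> k < q then xs i (js k) else False))
       (Pi_pmf {..<s} undefined (\<lambda>i. c (a i)))" for a :: "nat \<Rightarrow> 'a" and js :: "nat \<Rightarrow> nat"
  have D1: "D_sim s q \<eta> (type_dist n \<xi>) = bind_pmf PA (\<lambda>a. bind_pmf PJ (KS a))"
    unfolding \<eta>_def PA_def PJ_def KS_def \<tau>_def by (rule Dsim_type)
  have D2: "D_test n s q \<mu> = bind_pmf PA (\<lambda>a. bind_pmf PJ (KT a))"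
    unfolding \<eta>_def PA_def PJ_def KT_def c_def by (rule Dtest_form[OF det])
  have finPA: "finite (set_pmf PA)" unfolding PA_def by (intro finite_set_Pi_pmf) auto
  have finPJ: "finite (set_pmf PJ)" unfolding PJ_def using n by (intro finite_set_Pi_pmf) (simp_all add: set_pmf_of_set lessThan_empty_iff)
  have point: "tv_dist (KS a js) (KT a js) \<le> Bd a js" if a: "a \<in> set_pmf PA" and js: "js \<in> set_pmf PJ" for a js
  proof -
    have ai: "a i \<in> set_pmf \<eta>" if "i < s" for i
      using a that unfolding PA_def set_Pi_pmf[OF finite_lessThan] PiE_dflt_def by simp
    have jsP: "js \<in> PiE_dflt {..<q} 0 (\<lambda>_. {..<n})"
      using js n unfolding PJ_def set_Pi_pmf[OF finite_lessThan] by (simp add: o_def set_pmf_of_set lessThan_empty_iff)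
    have nonneg: "0 \<le> (\<Sum>i<s. indicator (-J) (a i) + indicator J (a i) * indicator (D - G (a i)) js + e)"
      using e by (intro sum_nonneg) auto
    show ?thesis
    proof (cases "js \<in> N")
      case True
      then have "Bd a js \<ge> 1" using nonneg unfolding Bd_def by simp
      then show ?thesis using tv_le_1[of "KS a js" "KT a js"] by linarith
    next
      case False
      then have jsD: "js \<in> D" using jsP unfolding N_def D_def distinct_tuples_def PiE_dflt_def by auto
      have KS': "KS a js = map_pmf comb (Pi_pmf {..<s} (row js undefined) (\<lambda>i. Pi_pmf {..<q} False (\<lambda>j. bernoulli_pmf (\<tau> (js j) (a i)))))"
        unfolding KS_def comb_def by (rule Pi_pmf_times) simp_all
      have KT': "KT a js = map_pmf comb (Pi_pmf {..<s} (row js undefined) (\<lambda>i. map_pmf (row js) (c (a i))))"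
      proof -
        have "Pi_pmf {..<s} (row js undefined) (\<lambda>i. map_pmf (row js) (c (a i)))
            = map_pmf (\<lambda>h. row js \<circ> h) (Pi_pmf {..<s} undefined (\<lambda>i. c (a i)))"
          by (rule Pi_pmf_map) simp_all
        moreover have "(\<lambda>xs. (\<lambda>(i, k). if i < s \<and> k < q then xs i (js k) else False)) = comb \<circ> (\<lambda>h. row js \<circ> h)"
          unfolding comb_def row_def by (simp add: fun_eq_iff)
        ultimately show ?thesis unfolding KT_def by (simp add: pmf.map_comp)
      qed
      have "tv_dist (KS a js) (KT a js) \<le> tv_dist (Pi_pmf {..<s} (row js undefined) (\<lambda>i. Pi_pmf {..<q} False (\<lambda>j. bernoulli_pmf (\<tau> (js j) (a i)))))
          (Pi_pmf {..<s} (row js undefined) (\<lambda>i. map_pmf (row js) (c (a i))))"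
        unfolding KS' KT' by (rule tv_map)
      also have "\<dots> \<le> (\<Sum>i<s. tv_dist (Pi_pmf {..<q} False (\<lambda>j. bernoulli_pmf (\<tau> (js j) (a i)))) (map_pmf (row js) (c (a i))))"
        by (rule tv_Pi) simp
      also have "\<dots> \<le> (\<Sum>i<s. indicator (-J) (a i) + indicator J (a i) * indicator (D - G (a i)) js + e)"
      proof (rule sum_mono)
        fix i assume i: "i \<in> {..<s}"
        define t where "t = tv_dist (Pi_pmf {..<q} False (\<lambda>j. bernoulli_pmf (\<tau> (js j) (a i)))) (map_pmf (row js) (c (a i)))"
        have t1: "t \<le> 1" unfolding t_def by (rule tv_le_1)
        have aii: "a i \<in> set_pmf (weight_dist \<xi>)" using ai[of i] i unfolding \<eta>_def by simp
        have "t \<le> indicator (-J) (a i) + indicator J (a i) * indicator (D - G (a i)) js + e"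
        proof (cases "a i \<in> J")
          case False then show ?thesis using t1 e by simp
        next
          case aJ: True
          show ?thesis
          proof (cases "js \<in> G (a i)")
            case True
            then have "eps_independent e q (c (a i)) js" unfolding G_def by simp
            then have "t \<le> e" unfolding t_def c_def \<tau>_def row_def
              by (rule row_bound[OF aii])
            then show ?thesis using aJ True by simp
          next
            case False
            then have "js \<in> D - G (a i)" using jsD by simp
            then show ?thesis using aJ t1 e by simp
          qed
        qed
        then show "tv_dist (Pi_pmf {..<q} False (\<lambda>j. bernoulli_pmf (\<tau> (js j) (a i)))) (map_pmf (row js) (c (a i)))
          \<le> indicator (-J) (a i) + indicator J (a i) * indicator (D - G (a i)) js + e" unfolding t_def .
      qed
      also have "\<dots> = Bd a js" unfolding Bd_def using False by simp
      finally show ?thesis .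
    qed
  qed
  have main: "tv_dist (D_sim s q \<eta> (type_dist n \<xi>)) (D_test n s q \<mu>) \<le> Ep PA (\<lambda>a. Ep PJ (Bd a))"
    unfolding D1 D2
  proof (rule tv_bind_left[OF _ integrable_measure_pmf_finite[OF finPA]])
    fix a assume a: "a \<in> set_pmf PA"
    show "tv_dist (bind_pmf PJ (KS a)) (bind_pmf PJ (KT a)) \<le> Ep PJ (Bd a)"
      by (rule tv_bind_left[OF point[OF a] integrable_measure_pmf_finite[OF finPJ]])
  qed
  define C where "C a = real q ^ 2 / real n + (\<Sum>i<s. indicator (-J) (a i) + 2 * e)" for a :: "nat \<Rightarrow> 'a"
  have EBd: "Ep PJ (Bd a) \<le> C a" for a
  proof -
    have iPJ: "integrable (measure_pmf PJ) f" for f :: "_ \<Rightarrow> real" by (rule integrable_measure_pmf_finite[OF finPJ])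
    have "Ep PJ (Bd a) = Ep PJ (indicator N) + Ep PJ (\<lambda>js. \<Sum>i<s. indicator (-J) (a i) + indicator J (a i) * indicator (D - G (a i)) js + e)"
      unfolding Bd_def by (rule Bochner_Integration.integral_add[OF iPJ iPJ])
    also have "Ep PJ (\<lambda>js. \<Sum>i<s. indicator (-J) (a i) + indicator J (a i) * indicator (D - G (a i)) js + e)
       = (\<Sum>i<s. Ep PJ (\<lambda>js. indicator (-J) (a i) + indicator J (a i) * indicator (D - G (a i)) js + e))"
      by (rule Bochner_Integration.integral_sum[OF iPJ])
    also have "\<dots> = (\<Sum>i<s. indicator (-J) (a i) + indicator J (a i) * Pr PJ (D - G (a i)) + e)"
    proof (rule sum.cong[OF refl])
      fix i
      have "Ep PJ (\<lambda>js. indicator (-J) (a i) + indicator J (a i) * indicator (D - G (a i)) js + e)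
        = Ep PJ (\<lambda>js. indicator (-J) (a i) + indicator J (a i) * indicator (D - G (a i)) js) + Ep PJ (\<lambda>js. e)"
        by (rule Bochner_Integration.integral_add[OF iPJ iPJ])
      also have "Ep PJ (\<lambda>js. indicator (-J) (a i) + indicator J (a i) * indicator (D - G (a i)) js :: real)
        = Ep PJ (\<lambda>js. indicator (-J) (a i)) + Ep PJ (\<lambda>js. indicator J (a i) * indicator (D - G (a i)) js :: real)"
        by (rule Bochner_Integration.integral_add[OF iPJ iPJ])
      also have "Ep PJ (\<lambda>js. indicator J (a i) * indicator (D - G (a i)) js :: real) = indicator J (a i) * Ep PJ (indicator (D - G (a i)))"
        by (rule Bochner_Integration.integral_mult_right[OF iPJ])
      also have "Ep PJ (indicator (D - G (a i))) = Pr PJ (D - G (a i))"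
        by simp
      finally show "Ep PJ (\<lambda>js. indicator (-J) (a i) + indicator J (a i) * indicator (D - G (a i)) js + e)
         = indicator (-J) (a i) + indicator J (a i) * Pr PJ (D - G (a i)) + e"
        by (simp add: prob_space_measure_pmf)
    qed
    also have "Ep PJ (indicator N) = Pr PJ N"
      by simp
    also have "Pr PJ N \<le> real q ^ 2 / real n"
      unfolding PJ_def N_def by (rule collision[OF n])
    also have "(\<Sum>i<s. indicator (-J) (a i) + indicator J (a i) * Pr PJ (D - G (a i)) + e) \<le> (\<Sum>i<s. indicator (-J) (a i) + 2 * e)"
    proof (rule sum_mono)
      fix i
      have "indicator J (a i) * Pr PJ (D - G (a i)) \<le> e"
      proof (cases "a i \<in> J")
        case True
        then have "Pr PJ (D - G (a i)) \<le> e"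
          unfolding PJ_def D_def G_def by (rule count_bad[OF n J(3) e])
        then show ?thesis using True by simp
      qed (use e in simp)
      then show "indicator (-J) (a i) + indicator J (a i) * Pr PJ (D - G (a i)) + e \<le> indicator (-J) (a i) + 2 * e"
        by simp
    qed
    finally show ?thesis unfolding C_def by simp
  qed
  have "Ep PA (\<lambda>a. Ep PJ (Bd a)) \<le> Ep PA C"
    by (intro integral_mono integrable_measure_pmf_finite[OF finPA] EBd)
  also have "Ep PA C = real q ^ 2 / real n + (\<Sum>i<s. Pr \<eta> (-J) + 2 * e)"
  proof -
    have iPA: "integrable (measure_pmf PA) f" for f :: "_ \<Rightarrow> real" by (rule integrable_measure_pmf_finite[OF finPA])
    have "Ep PA C = Ep PA (\<lambda>a. real q ^ 2 / real n) + Ep PA (\<lambda>a. \<Sum>i<s. indicator (-J) (a i) + 2 * e)"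
      unfolding C_def by (rule Bochner_Integration.integral_add[OF iPA iPA])
    also have "Ep PA (\<lambda>a. \<Sum>i<s. indicator (-J) (a i) + 2 * e) = (\<Sum>i<s. Ep PA (\<lambda>a. indicator (-J) (a i) + 2 * e))"
      by (rule Bochner_Integration.integral_sum[OF iPA])
    also have "\<dots> = (\<Sum>i<s. Pr \<eta> (-J) + 2 * e)"
    proof (rule sum.cong[OF refl])
      fix i assume i: "i \<in> {..<s}"
      have "Ep PA (\<lambda>a. indicator (-J) (a i) + 2 * e) = Ep PA (\<lambda>a. indicator (-J) (a i)) + Ep PA (\<lambda>a. 2 * e)"
        by (rule Bochner_Integration.integral_add[OF iPA iPA])
      also have "Ep PA (\<lambda>a. indicator (-J) (a i)) = Ep \<eta> (indicator (-J) :: _ \<Rightarrow> real)"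
        unfolding PA_def using i by (intro E_component) auto
      also have "Ep \<eta> (indicator (-J)) = Pr \<eta> (-J)"
        by simp
      finally show "Ep PA (\<lambda>a. indicator (-J) (a i) + 2 * e) = Pr \<eta> (-J) + 2 * e"
        by (simp add: prob_space_measure_pmf)
    qed
    finally show ?thesis by (simp add: prob_space_measure_pmf)
  qed
  also have "\<dots> \<le> real q ^ 2 / real n + (\<Sum>i<s. 3 * e)"
  proof -
    have "Pr \<eta> (-J) = 1 - Pr \<eta> J"
      using measure_pmf.prob_compl[of J \<eta>] by (simp add: Compl_eq_Diff_UNIV)
    then have "Pr \<eta> (-J) \<le> e" using J(2) by simp
    then show ?thesis by (intro add_left_mono sum_mono) simp
  qed
  also have "\<dots> = real q ^ 2 / real n + 3 * real s * e" by simp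
  finally show ?thesis using main unfolding \<eta>_def by linarith
qed



lemma arith_final:
  fixes s \<epsilon> :: real
  assumes "s \<ge> 0"
  shows "\<epsilon> / 3 + (\<epsilon> / 3 + 5 * \<epsilon> / (18 * (s + 1))) + (\<epsilon> / (18 * (s + 1)) + 3 * s * (\<epsilon> / (9 * (s + 1)))) = \<epsilon>"
proof -
  define u where "u = s + 1"
  have u: "u > 0" using assms u_def by simp
  have "\<epsilon> / 3 + (\<epsilon> / 3 + 5 * \<epsilon> / (18 * u)) + (\<epsilon> / (18 * u) + 3 * (u - 1) * (\<epsilon> / (9 * u))) = \<epsilon>"
    using u by (simp add: field_simps)
  then show ?thesis unfolding u_def by simp
qed

theorem lemma4p4:
  fixes s q n :: nat and \<epsilon> :: real
    and \<mu> :: "(nat \<Rightarrow> bool) pmf" and \<xi> :: "((nat \<Rightarrow> bool) \<times> 'a::finite) pmf"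
    and \<eta>' :: "'a pmf" and \<Lambda>' :: "('a \<Rightarrow> real) pmf"
  assumes "0 < s" "0 < q" "0 < \<epsilon>" "\<epsilon> < 1"
    and "is_detailing n \<mu> \<xi>"
    and "finite (set_pmf \<Lambda>')" "\<forall>t\<in>set_pmf \<Lambda>'. \<forall>a. 0 \<le> t a \<and> t a \<le> 1"
    and "d_EM (weight_dist \<xi>) (type_dist n \<xi>) \<Lambda>' \<le> \<epsilon> / (3 * s * q)"
    and "tv_dist (weight_dist \<xi>) \<eta>' \<le> \<epsilon> / (3 * s)"
    and "real n \<ge> 18 * q^2 * (s + 1) / \<epsilon>"
    and "good_detailing n (\<epsilon> / (9 * (s + 1))) q \<xi>"
  shows "tv_dist (D_sim s q \<eta>' \<Lambda>') (D_test n s q \<mu>) \<le> \<epsilon>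
    \<and> (\<forall>\<alpha> :: (nat \<times> nat \<Rightarrow> bool) \<Rightarrow> real. (\<forall>M. 0 \<le> \<alpha> M \<and> \<alpha> M \<le> 1) \<longrightarrow>
        \<bar>measure_pmf.expectation (D_sim s q \<eta>' \<Lambda>') \<alpha>
          - measure_pmf.expectation (D_test n s q \<mu>) \<alpha>\<bar> \<le> \<epsilon>)"
proof -
  define \<eta> where "\<eta> = weight_dist \<xi>"
  define \<Lambda> where "\<Lambda> = type_dist n \<xi>"
  have s0: "real s > 0" and q0: "real q > 0" using assms(1,2) by auto
  have ep: "\<epsilon> > 0" by (rule assms(3))
  have pos: "18 * real q ^ 2 * (real s + 1) / \<epsilon> > 0" using s0 q0 ep by simp
  have nbound: "18 * real q ^ 2 * (real s + 1) / \<epsilon> \<le> real n" using assms(10) by (simp add: algebra_simps)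
  then have n0: "n > 0" using pos by linarith
  have qn: "real q ^ 2 / real n \<le> \<epsilon> / (18 * (real s + 1))"
  proof -
    have "18 * real q ^ 2 * (real s + 1) \<le> real n * \<epsilon>" using nbound ep by (simp add: divide_le_eq)
    then show ?thesis using n0 s0 ep by (simp add: divide_le_eq le_divide_eq field_simps)
  qed
  have C: "tv_dist (D_sim s q \<eta> \<Lambda>) (D_test n s q \<mu>) \<le> real q ^ 2 / real n + 3 * real s * (\<epsilon> / (9 * (real s + 1)))"
  proof -
    have g: "good_detailing n (\<epsilon> / (9 * (real s + 1))) q \<xi>" using assms(11) by (simp add: add.commute)
    have "0 \<le> \<epsilon> / (9 * (real s + 1))" using ep s0 by simp
    then show ?thesis unfolding \<eta>_def \<Lambda>_def by (rule stepC[OF assms(5) n0 _ g])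
  qed
  have A: "tv_dist (D_sim s q \<eta>' \<Lambda>') (D_sim s q \<eta> \<Lambda>') \<le> \<epsilon> / 3"
  proof -
    have "tv_dist (D_sim s q \<eta>' \<Lambda>') (D_sim s q \<eta> \<Lambda>') \<le> real s * tv_dist \<eta>' \<eta>" by (rule stepA)
    also have "\<dots> \<le> real s * (\<epsilon> / (3 * real s))"
      using assms(9) s0 unfolding \<eta>_def by (intro mult_left_mono) (auto simp: tv_sym)
    also have "\<dots> = \<epsilon> / 3" using s0 by simp
    finally show ?thesis .
  qed
  define \<delta> where "\<delta> = 5 * \<epsilon> / (18 * (real s + 1) * real s * real q)"
  have \<delta>0: "\<delta> > 0" unfolding \<delta>_def using ep s0 q0 by simp
  define f where "f \<pi> = Ep \<pi> (\<lambda>(x, y). d_l1 \<eta> x y)" for \<pi> :: "(('a \<Rightarrow> real) \<times> ('a \<Rightarrow> real)) pmf"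
  have ne: "couplings \<Lambda> \<Lambda>' \<noteq> {}"
    using map_fst_pair_pmf[of \<Lambda> \<Lambda>'] map_snd_pair_pmf[of \<Lambda> \<Lambda>'] unfolding couplings_def by blast
  have dl1nn: "0 \<le> d_l1 \<eta> x y" for x y unfolding d_l1_def by (intro sum_nonneg) auto
  have bdd: "bdd_below (f ` couplings \<Lambda> \<Lambda>')"
    by (rule bdd_belowI[where m=0]) (auto simp: f_def dl1nn case_prod_beta intro!: integral_nonneg_AE)
  have "(INF \<pi>\<in>couplings \<Lambda> \<Lambda>'. f \<pi>) < \<epsilon> / (3 * real s * real q) + \<delta>"
    using assms(8) \<delta>0 unfolding d_EM_def f_def \<eta>_def \<Lambda>_def by simp
  then obtain \<pi> where \<pi>: "\<pi> \<in> couplings \<Lambda> \<Lambda>'" "f \<pi> < \<epsilon> / (3 * real s * real q) + \<delta>"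
    using cINF_less_iff[OF ne bdd] by blast
  have m1: "map_pmf fst \<pi> = \<Lambda>" and m2: "map_pmf snd \<pi> = \<Lambda>'" using \<pi>(1) unfolding couplings_def by auto
  have finL: "finite (set_pmf \<Lambda>)" unfolding \<Lambda>_def type_dist_def using n0 by (simp add: set_pmf_of_set lessThan_empty_iff)
  have finpi: "finite (set_pmf \<pi>)"
  proof (rule finite_subset[of _ "set_pmf \<Lambda> \<times> set_pmf \<Lambda>'"])
    show "set_pmf \<pi> \<subseteq> set_pmf \<Lambda> \<times> set_pmf \<Lambda>'"
    proof
      fix p assume p: "p \<in> set_pmf \<pi>"
      have "fst p \<in> set_pmf (map_pmf fst \<pi>)" "snd p \<in> set_pmf (map_pmf snd \<pi>)" using p by auto
      then show "p \<in> set_pmf \<Lambda> \<times> set_pmf \<Lambda>'" unfolding m1 m2 by (simp add: mem_Times_iff)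
    qed
    show "finite (set_pmf \<Lambda> \<times> set_pmf \<Lambda>')" using finL assms(6) by simp
  qed
  have B: "tv_dist (D_sim s q \<eta> \<Lambda>') (D_sim s q \<eta> \<Lambda>) \<le> \<epsilon> / 3 + 5 * \<epsilon> / (18 * (real s + 1))"
  proof -
    have "tv_dist (D_sim s q \<eta> \<Lambda>') (D_sim s q \<eta> \<Lambda>) = tv_dist (D_sim s q \<eta> (map_pmf fst \<pi>)) (D_sim s q \<eta> (map_pmf snd \<pi>))"
      unfolding m1 m2 by (rule tv_sym)
    also have "\<dots> \<le> real s * real q * f \<pi>" unfolding f_def by (rule stepB[OF finpi])
    also have "\<dots> \<le> real s * real q * (\<epsilon> / (3 * real s * real q) + \<delta>)"
      using \<pi>(2) s0 q0 by (intro mult_left_mono) auto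
    also have "\<dots> = \<epsilon> / 3 + 5 * \<epsilon> / (18 * (real s + 1))"
    proof -
      have "real s * real q * (\<epsilon> / (3 * real s * real q)) = \<epsilon> / 3" using s0 q0 by simp
      moreover have "real s * real q * \<delta> = 5 * \<epsilon> / (18 * (real s + 1))"
        unfolding \<delta>_def using s0 q0 by simp
      ultimately show ?thesis by (simp add: distrib_left)
    qed
    finally show ?thesis .
  qed
  have tv: "tv_dist (D_sim s q \<eta>' \<Lambda>') (D_test n s q \<mu>) \<le> \<epsilon>"
  proof -
    have "tv_dist (D_sim s q \<eta>' \<Lambda>') (D_test n s q \<mu>)
        \<le> tv_dist (D_sim s q \<eta>' \<Lambda>') (D_sim s q \<eta> \<Lambda>') + tv_dist (D_sim s q \<eta> \<Lambda>') (D_test n s q \<mu>)"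
      by (rule tv_triangle)
    also have "tv_dist (D_sim s q \<eta> \<Lambda>') (D_test n s q \<mu>)
        \<le> tv_dist (D_sim s q \<eta> \<Lambda>') (D_sim s q \<eta> \<Lambda>) + tv_dist (D_sim s q \<eta> \<Lambda>) (D_test n s q \<mu>)"
      by (rule tv_triangle)
    finally have "tv_dist (D_sim s q \<eta>' \<Lambda>') (D_test n s q \<mu>)
       \<le> \<epsilon> / 3 + (\<epsilon> / 3 + 5 * \<epsilon> / (18 * (real s + 1))) + (\<epsilon> / (18 * (real s + 1)) + 3 * real s * (\<epsilon> / (9 * (real s + 1))))"
      using A B C qn by linarith
    also have "\<dots> = \<epsilon>" by (rule arith_final) simp
    finally show ?thesis .
  qed
  show ?thesis
  proof (intro conjI allI impI tv)
    fix \<alpha> :: "(nat \<times> nat \<Rightarrow> bool) \<Rightarrow> real"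
    assume "\<forall>M. 0 \<le> \<alpha> M \<and> \<alpha> M \<le> 1"
    then have "\<bar>Ep (D_sim s q \<eta>' \<Lambda>') \<alpha> - Ep (D_test n s q \<mu>) \<alpha>\<bar> \<le> tv_dist (D_sim s q \<eta>' \<Lambda>') (D_test n s q \<mu>)"
      by (intro tv_expectation) auto
    then show "\<bar>Ep (D_sim s q \<eta>' \<Lambda>') \<alpha> - Ep (D_test n s q \<mu>) \<alpha>\<bar> \<le> \<epsilon>" using tv by linarith
  qed
qed

end
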